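(* Let $n\ge 1$ and let $\mathcal F_{Acaa}(X_1,\dots,X_n)=\bigoplus_{k\ge1}\mathcal F^k_{Acaa}(X_1,\dots,X_n)$ be the free Acaa-algebra over a field $\mathbb K$ of characteristic $0$ on generators $X_1,\dots,X_n$, graded by degree in the generators. Then: $\mathcal F^1_{Acaa}$ is spanned by $X_1,\dots,X_n$; $\mathcal F^2_{Acaa}$ is spanned by the elements $[X_i,X_j]$ with $1\le i<j\le n$; $\mathcal F^3_{Acaa}$ is spanned by the elements $[X_i,[X_j,X_k]]$ with $1\le i<j<k\le n$; and $\mathcal F^k_{Acaa}(X_1,\dots,X_n)=0$ for all $k\ge 4$.
   Context: An Acaa-algebra over a field $\mathbb K$ of characteristic $0$ is a $\mathbb K$-vector space $A$ with a bilinear product $[\cdot,\cdot]$ which is anticommutative, $[x,y]=-[y,x]$, and satisfies $[x_1,[x_2,x_3]]=[x_2,[x_3,x_1]]$ for all $x_1,x_2,x_3\in A$. The free Acaa-algebra on $X_1,\dots,X_n$ is the quotient of the free nonassociative algebra on $X_1,\dots,X_n$ by the ideal generated by these identities; it is graded by the number of generators in a monomial, $\mathcal F^k_{Acaa}$ denoting the degree-$k$ homogeneous component. *)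

theory Defs
  imports "HOL-Library.Poly_Mapping"
begin

text \<open>Nonassociative monomials (binary bracketings) in generators indexed by nat;
  generator X_i is the leaf Leaf i.\<close>
datatype mono = Leaf nat | Node mono mono

fun leaves :: "mono \<Rightarrow> nat set" where
  "leaves (Leaf i) = {i}"
| "leaves (Node s t) = leaves s \<union> leaves t"

fun deg :: "mono \<Rightarrow> nat" where
  "deg (Leaf i) = 1"
| "deg (Node s t) = deg s + deg t"

text \<open>The free nonassociative algebra over 'k: finitely supported linear combinations
  of monomials, with the bilinear product extending Node.\<close>
type_synonym 'k nalg = "mono \<Rightarrow>\<^sub>0 'k"

definition gen :: "nat \<Rightarrow> 'k::field nalg" where
  "gen i = Poly_Mapping.single (Leaf i) 1"

definition smul :: "'k::field \<Rightarrow> 'k nalg \<Rightarrow> 'k nalg" where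
  "smul c p = Poly_Mapping.map (\<lambda>a. c * a) p"

definition mul :: "'k::field nalg \<Rightarrow> 'k nalg \<Rightarrow> 'k nalg" where
  "mul p q = (\<Sum>s\<in>Poly_Mapping.keys p. \<Sum>t\<in>Poly_Mapping.keys q.
      Poly_Mapping.single (Node s t) (Poly_Mapping.lookup p s * Poly_Mapping.lookup q t))"

definition FA :: "nat \<Rightarrow> 'k::field nalg set" where
  "FA n = {p. \<forall>t\<in>Poly_Mapping.keys p. leaves t \<subseteq> {1..n}}"

definition FAdeg :: "nat \<Rightarrow> nat \<Rightarrow> 'k::field nalg set" where
  "FAdeg n k = {p \<in> FA n. \<forall>t\<in>Poly_Mapping.keys p. deg t = k}"

inductive_set acaa_ideal :: "nat \<Rightarrow> 'k::field nalg set" for n where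
  anti: "x \<in> FA n \<Longrightarrow> y \<in> FA n \<Longrightarrow> mul x y + mul y x \<in> acaa_ideal n"
| cyc: "x1 \<in> FA n \<Longrightarrow> x2 \<in> FA n \<Longrightarrow> x3 \<in> FA n \<Longrightarrow>
          mul x1 (mul x2 x3) - mul x2 (mul x3 x1) \<in> acaa_ideal n"
| zero: "0 \<in> acaa_ideal n"
| add: "a \<in> acaa_ideal n \<Longrightarrow> b \<in> acaa_ideal n \<Longrightarrow> a + b \<in> acaa_ideal n"
| scal: "a \<in> acaa_ideal n \<Longrightarrow> smul c a \<in> acaa_ideal n"
| mulL: "a \<in> acaa_ideal n \<Longrightarrow> x \<in> FA n \<Longrightarrow> mul x a \<in> acaa_ideal n"
| mulR: "a \<in> acaa_ideal n \<Longrightarrow> x \<in> FA n \<Longrightarrow> mul a x \<in> acaa_ideal n"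

text \<open>Congruence modulo the ideal: equality in the free Acaa-algebra
  F_Acaa(X_1..X_n) = FA n / acaa_ideal n.\<close>
definition acaa_eq :: "nat \<Rightarrow> 'k::field nalg \<Rightarrow> 'k nalg \<Rightarrow> bool" where
  "acaa_eq n p q \<longleftrightarrow> p - q \<in> acaa_ideal n"

end

theory Submission
  imports Defs
begin


lemma lookup_smul[simp]: "Poly_Mapping.lookup (smul c p) t = c * Poly_Mapping.lookup p t"
  by (simp add: smul_def map.rep_eq when_def)

lemma lookup_mul_Node[simp]: "Poly_Mapping.lookup (mul p q) (Node s t) = Poly_Mapping.lookup p s * Poly_Mapping.lookup q t"
proof -
  have "Poly_Mapping.lookup (mul p q) (Node s t) =
     (\<Sum>s'\<in>Poly_Mapping.keys p. \<Sum>t'\<in>Poly_Mapping.keys q.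
        (if s' = s \<and> t' = t then Poly_Mapping.lookup p s' * Poly_Mapping.lookup q t' else 0))"
    unfolding mul_def by (simp add: lookup_sum lookup_single when_def)
  also have "\<dots> = (\<Sum>s'\<in>Poly_Mapping.keys p.
        (if s' = s then Poly_Mapping.lookup p s' * Poly_Mapping.lookup q t else 0))"
    by (rule sum.cong) (auto simp: sum.delta' in_keys_iff)
  also have "\<dots> = Poly_Mapping.lookup p s * Poly_Mapping.lookup q t"
    by (auto simp: sum.delta' in_keys_iff)
  finally show ?thesis .
qed

lemma lookup_mul_Leaf[simp]: "Poly_Mapping.lookup (mul p q) (Leaf i) = 0"
  unfolding mul_def by (simp add: lookup_sum lookup_single when_def)

lemma mul_add_left: "mul (a + b) c = mul a c + mul b c"
  by (rule poly_mapping_eqI, case_tac k) (auto simp: lookup_add algebra_simps)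
lemma mul_add_right: "mul c (a + b) = mul c a + mul c b"
  by (rule poly_mapping_eqI, case_tac k) (auto simp: lookup_add algebra_simps)
lemma mul_minus_left: "mul (a - b) c = mul a c - mul b c"
  by (rule poly_mapping_eqI, case_tac k) (auto simp: lookup_minus algebra_simps)
lemma mul_minus_right: "mul c (a - b) = mul c a - mul c b"
  by (rule poly_mapping_eqI, case_tac k) (auto simp: lookup_minus algebra_simps)
lemma mul_uminus_left: "mul (- a) c = - mul a c"
  by (rule poly_mapping_eqI, case_tac k) (auto simp: algebra_simps)
lemma mul_uminus_right: "mul c (- a) = - mul c a"
  by (rule poly_mapping_eqI, case_tac k) (auto simp: algebra_simps)
lemma mul_zero_left[simp]: "mul 0 c = 0"
  by (rule poly_mapping_eqI, case_tac k) (auto)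
lemma mul_zero_right[simp]: "mul c 0 = 0"
  by (rule poly_mapping_eqI, case_tac k) (auto)
lemma mul_single: "mul (Poly_Mapping.single s a) (Poly_Mapping.single t b) = Poly_Mapping.single (Node s t) (a * b)"
  by (rule poly_mapping_eqI, case_tac k) (auto simp: lookup_single when_def)

lemma smul_add: "smul c (a + b) = smul c a + smul c b"
  by (rule poly_mapping_eqI) (simp add: lookup_add algebra_simps)
lemma smul_add_left: "smul (c + d) a = smul c a + smul d a"
  by (rule poly_mapping_eqI) (simp add: lookup_add algebra_simps)
lemma smul_minus: "smul c (a - b) = smul c a - smul c b"
  by (rule poly_mapping_eqI) (simp add: lookup_minus algebra_simps)
lemma smul_smul: "smul c (smul d a) = smul (c * d) a"
  by (rule poly_mapping_eqI) (simp)
lemma smul_neg1: "smul (-1) a = - a"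
  by (rule poly_mapping_eqI) (simp)
lemma smul_neg: "smul (- c) a = - smul c a"
  by (rule poly_mapping_eqI) (simp)
lemma smul_one[simp]: "smul 1 a = a"
  by (rule poly_mapping_eqI) (simp)
lemma smul_zero[simp]: "smul 0 a = 0" "smul c 0 = 0"
  by (rule poly_mapping_eqI, simp)+
lemma smul_single: "smul c (Poly_Mapping.single t a) = Poly_Mapping.single t (c * a)"
  by (rule poly_mapping_eqI) (simp add: lookup_single when_def)
lemma smul_sum: "smul c (sum f S) = (\<Sum>x\<in>S. smul c (f x))"
  by (rule poly_mapping_eqI) (simp add: lookup_sum sum_distrib_left)
lemma mul_smul_right: "mul a (smul c b) = smul c (mul a b)"
  by (rule poly_mapping_eqI, case_tac k) (auto)
lemma half: "smul (1/2) (a + a) = (a :: 'k::field_char_0 nalg)"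
  by (rule poly_mapping_eqI) (simp add: lookup_add)

lemma expand: "p = (\<Sum>t\<in>Poly_Mapping.keys p. Poly_Mapping.single t (Poly_Mapping.lookup p t))"
  by (rule poly_mapping_eqI) (auto simp: lookup_sum lookup_single when_def sum.delta in_keys_iff)





lemma FA_iff: "p \<in> FA n \<longleftrightarrow> (\<forall>t. Poly_Mapping.lookup p t \<noteq> 0 \<longrightarrow> leaves t \<subseteq> {1..n})"
  by (auto simp: FA_def in_keys_iff)

lemma FA_add[intro]: "a \<in> FA n \<Longrightarrow> b \<in> FA n \<Longrightarrow> a + b \<in> FA n"
proof -
  have "Poly_Mapping.lookup a t \<noteq> 0 \<or> Poly_Mapping.lookup b t \<noteq> 0"
    if "Poly_Mapping.lookup (a + b) t \<noteq> 0" for t using that by (auto simp: lookup_add)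
  thus "a \<in> FA n \<Longrightarrow> b \<in> FA n \<Longrightarrow> a + b \<in> FA n" unfolding FA_iff by blast
qed
lemma FA_uminus[intro]: "a \<in> FA n \<Longrightarrow> - a \<in> FA n"
  by (auto simp: FA_iff)
lemma FA_minus[intro]: "a \<in> FA n \<Longrightarrow> b \<in> FA n \<Longrightarrow> a - b \<in> FA n"
  using FA_add[of a n "- b"] FA_uminus[of b n] by simp
lemma FA_smul[intro]: "a \<in> FA n \<Longrightarrow> smul c a \<in> FA n"
  by (auto simp: FA_iff)
lemma FA_mul[intro]: "a \<in> FA n \<Longrightarrow> b \<in> FA n \<Longrightarrow> mul a b \<in> FA n"
  unfolding FA_iff apply (intro allI impI)
  subgoal for t by (cases t) auto
  done
lemma FA_gen[intro]: "i \<in> {1..n} \<Longrightarrow> gen i \<in> FA n"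
  by (auto simp: FA_iff gen_def lookup_single when_def)
lemma FA_zero[intro]: "0 \<in> FA n"
  by (auto simp: FA_iff)

fun mon :: "mono \<Rightarrow> 'k::field nalg" where
  "mon (Leaf i) = gen i"
| "mon (Node s t) = mul (mon s) (mon t)"

lemma mon_single: "mon t = Poly_Mapping.single t 1"
  by (induction t) (auto simp: gen_def mul_single)

lemma FA_mon[intro]: "leaves t \<subseteq> {1..n} \<Longrightarrow> mon t \<in> FA n"
  by (induction t) auto

lemma expand_mon: "p = (\<Sum>t\<in>Poly_Mapping.keys p. smul (Poly_Mapping.lookup p t) (mon t))"
  by (subst expand) (simp add: mon_single smul_single)

lemma keys_induct:
  assumes "P 0" "\<And>a b. P a \<Longrightarrow> P b \<Longrightarrow> P (a + b)" "\<And>c a. P a \<Longrightarrow> P (smul c a)"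
    "\<And>t. t \<in> Poly_Mapping.keys p \<Longrightarrow> P (mon t)"
  shows "P p"
proof -
  have "P (\<Sum>t\<in>S. smul (Poly_Mapping.lookup p t) (mon t))" if "S \<subseteq> Poly_Mapping.keys p" for S
  proof -
    have "finite S" by (rule rev_finite_subset[OF finite_keys that])
    thus ?thesis using that
    proof (induction S)
      case empty then show ?case using assms(1) by simp
    next
      case (insert x F)
      have "P (smul (Poly_Mapping.lookup p x) (mon x))" using insert.prems by (intro assms(3) assms(4)) blast
      moreover have "P (\<Sum>t\<in>F. smul (Poly_Mapping.lookup p t) (mon t))" using insert.prems by (intro insert.IH) blast
      ultimately show ?case using insert.hyps by (simp add: assms(2))
    qed
  qed
  from this[OF subset_refl] show ?thesis by (simp only: expand_mon[of p, symmetric])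
qed




lemma I_minus: "a \<in> acaa_ideal n \<Longrightarrow> b \<in> acaa_ideal n \<Longrightarrow> a - b \<in> acaa_ideal n"
  using acaa_ideal.add[of a n "smul (-1) b"] acaa_ideal.scal[of b n "-1"] by (simp add: smul_neg1)
lemma I_uminus: "a \<in> acaa_ideal n \<Longrightarrow> - a \<in> acaa_ideal n"
  using acaa_ideal.scal[of a n "-1"] by (simp add: smul_neg1)

lemma eq_refl[intro]: "acaa_eq n a a"
  by (simp add: acaa_eq_def acaa_ideal.zero)
lemma eq_sym: "acaa_eq n a b \<Longrightarrow> acaa_eq n b a"
  unfolding acaa_eq_def using I_uminus[of "a - b" n] by simp
lemma eq_trans[trans]: "acaa_eq n a b \<Longrightarrow> acaa_eq n b c \<Longrightarrow> acaa_eq n a c"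
  unfolding acaa_eq_def using acaa_ideal.add[of "a - b" n "b - c"] by simp
lemma eq_add: "acaa_eq n a b \<Longrightarrow> acaa_eq n c d \<Longrightarrow> acaa_eq n (a + c) (b + d)"
  unfolding acaa_eq_def using acaa_ideal.add[of "a - b" n "c - d"] by (simp add: algebra_simps)
lemma eq_smul: "acaa_eq n a b \<Longrightarrow> acaa_eq n (smul c a) (smul c b)"
  unfolding acaa_eq_def using acaa_ideal.scal[of "a - b" n c] by (simp add: smul_minus)
lemma eq_neg: "acaa_eq n a b \<Longrightarrow> acaa_eq n (- a) (- b)"
  unfolding acaa_eq_def using I_uminus[of "a - b" n] by simp
lemma eq_mulL: "acaa_eq n a b \<Longrightarrow> x \<in> FA n \<Longrightarrow> acaa_eq n (mul x a) (mul x b)"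
  unfolding acaa_eq_def using acaa_ideal.mulL[of "a - b" n x] by (simp add: mul_minus_right)
lemma eq_mulR: "acaa_eq n a b \<Longrightarrow> x \<in> FA n \<Longrightarrow> acaa_eq n (mul a x) (mul b x)"
  unfolding acaa_eq_def using acaa_ideal.mulR[of "a - b" n x] by (simp add: mul_minus_left)
lemma eq_self_neg: "acaa_eq n a (- a) \<Longrightarrow> acaa_eq n (a :: 'k::field_char_0 nalg) 0"
  unfolding acaa_eq_def using acaa_ideal.scal[of "a + a" n "1/2"] by (simp add: half)




lemma anti: "x \<in> FA n \<Longrightarrow> y \<in> FA n \<Longrightarrow> acaa_eq n (mul x y) (- mul y x)"
  unfolding acaa_eq_def using acaa_ideal.anti[of x n y] by simp
lemma cyc: "x \<in> FA n \<Longrightarrow> y \<in> FA n \<Longrightarrow> z \<in> FA n \<Longrightarrow> acaa_eq n (mul x (mul y z)) (mul y (mul z x))"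
  unfolding acaa_eq_def using acaa_ideal.cyc by blast

lemma sw23: "x \<in> FA n \<Longrightarrow> y \<in> FA n \<Longrightarrow> z \<in> FA n \<Longrightarrow> acaa_eq n (mul x (mul y z)) (- mul x (mul z y))"
  using eq_mulL[OF anti[of y n z] , of x] by (simp add: mul_uminus_right)
lemma sw12: "x \<in> FA n \<Longrightarrow> y \<in> FA n \<Longrightarrow> z \<in> FA n \<Longrightarrow> acaa_eq n (mul x (mul y z)) (- mul y (mul x z))"
proof -
  assume h: "x \<in> FA n" "y \<in> FA n" "z \<in> FA n"
  have "acaa_eq n (mul x (mul y z)) (- mul x (mul z y))" using h by (rule sw23)
  also have "acaa_eq n (- mul x (mul z y)) (- mul z (mul y x))" using h by (intro eq_neg cyc)
  also have "acaa_eq n (- mul z (mul y x)) (- mul y (mul x z))" using h by (intro eq_neg cyc)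
  finally show ?thesis .
qed

lemma f_anti12: "x \<in> FA n \<Longrightarrow> y \<in> FA n \<Longrightarrow> z \<in> FA n \<Longrightarrow> w \<in> FA n \<Longrightarrow>
  acaa_eq n (mul x (mul y (mul z w))) (- mul y (mul x (mul z w)))"
  by (rule sw12) auto
lemma f_anti34: "x \<in> FA n \<Longrightarrow> y \<in> FA n \<Longrightarrow> z \<in> FA n \<Longrightarrow> w \<in> FA n \<Longrightarrow>
  acaa_eq n (mul x (mul y (mul z w))) (- mul x (mul y (mul w z)))"
  using eq_mulL[OF sw23[of y n z w], of x] by (auto simp add: mul_uminus_right)
lemma f_cyc234: "x \<in> FA n \<Longrightarrow> y \<in> FA n \<Longrightarrow> z \<in> FA n \<Longrightarrow> w \<in> FA n \<Longrightarrow>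
  acaa_eq n (mul x (mul y (mul z w))) (mul x (mul z (mul w y)))"
  using eq_mulL[OF cyc[of y n z w], of x] by auto

lemma f_zero: assumes h: "x \<in> FA n" "y \<in> FA n" "z \<in> FA n" "w \<in> FA n"
  shows "acaa_eq n (mul x (mul y (mul z w))) (0 :: 'k::field_char_0 nalg)"
proof (rule eq_self_neg)
  have "acaa_eq n (mul x (mul y (mul z w))) (mul (mul z w) (mul x y))"
    using h by (intro eq_sym[OF cyc]) auto
  also have "acaa_eq n \<dots> (- mul (mul x y) (mul z w))" using h by (intro anti) auto
  also have "acaa_eq n \<dots> (- mul z (mul w (mul x y)))" using h by (intro eq_neg cyc) auto
  also have "acaa_eq n \<dots> (- mul z (mul x (mul y w)))" using h by (intro eq_neg f_cyc234) auto
  also have "acaa_eq n \<dots> (- (- mul x (mul z (mul y w))))" using h by (intro eq_neg f_anti12) auto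
  also have "acaa_eq n \<dots> (- (- mul x (mul y (mul w z))))" using h by (intro eq_neg f_cyc234) auto
  also have "acaa_eq n \<dots> (- (- (- mul x (mul y (mul z w)))))" using h by (intro eq_neg f_anti34) auto
  finally show "acaa_eq n (mul x (mul y (mul z w))) (- mul x (mul y (mul z w)))" by simp
qed

lemma eq_zero_neg: "acaa_eq n a (- b) \<Longrightarrow> acaa_eq n b 0 \<Longrightarrow> acaa_eq n a 0"
  using eq_trans[of n a "- b" 0] eq_neg[of n b 0] by simp

lemma z2: assumes h: "x \<in> FA n" "y \<in> FA n" "z \<in> FA n" "w \<in> FA n"
  shows "acaa_eq n (mul (mul x y) (mul z w)) (0 :: 'k::field_char_0 nalg)"
proof -
  have "acaa_eq n (mul (mul x y) (mul z w)) (mul z (mul w (mul x y)))" using h by (intro cyc) auto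
  also have "acaa_eq n \<dots> 0" using h by (intro f_zero) auto
  finally show ?thesis .
qed
lemma z3: assumes h: "x \<in> FA n" "y \<in> FA n" "z \<in> FA n" "w \<in> FA n"
  shows "acaa_eq n (mul x (mul (mul y z) w)) (0 :: 'k::field_char_0 nalg)"
  by (rule eq_zero_neg[OF _ f_zero[OF h(1) h(4) h(2) h(3)]])
     (use eq_mulL[OF anti[of "mul y z" n w], of x] h in \<open>auto simp: mul_uminus_right\<close>)
lemma z4: assumes h: "x \<in> FA n" "y \<in> FA n" "z \<in> FA n" "w \<in> FA n"
  shows "acaa_eq n (mul (mul x (mul y z)) w) (0 :: 'k::field_char_0 nalg)"
  by (rule eq_zero_neg[OF _ f_zero[OF h(4) h(1) h(2) h(3)]]) (intro anti, use h in auto)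
lemma z5: assumes h: "x \<in> FA n" "y \<in> FA n" "z \<in> FA n" "w \<in> FA n"
  shows "acaa_eq n (mul (mul (mul x y) z) w) (0 :: 'k::field_char_0 nalg)"
  by (rule eq_zero_neg[OF _ z3[OF h(4) h(1) h(2) h(3)]]) (intro anti, use h in auto)





definition spanr :: "'a set \<Rightarrow> ('a \<Rightarrow> 'k::field nalg) \<Rightarrow> 'k nalg \<Rightarrow> bool" where
  "spanr S B q \<longleftrightarrow> (\<exists>c. q = (\<Sum>x\<in>S. smul (c x) (B x)))"

definition Qr :: "nat \<Rightarrow> 'a set \<Rightarrow> ('a \<Rightarrow> 'k::field nalg) \<Rightarrow> 'k nalg \<Rightarrow> bool" where
  "Qr n S B q \<longleftrightarrow> (\<exists>v. spanr S B v \<and> acaa_eq n q v)"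

lemma spanr_add: "spanr S B a \<Longrightarrow> spanr S B b \<Longrightarrow> spanr S B (a + b)"
  unfolding spanr_def
proof (elim exE)
  fix c d assume "a = (\<Sum>x\<in>S. smul (c x) (B x))" "b = (\<Sum>x\<in>S. smul (d x) (B x))"
  then have "a + b = (\<Sum>x\<in>S. smul (c x + d x) (B x))"
    by (simp add: smul_add_left sum.distrib)
  thus "\<exists>c. a + b = (\<Sum>x\<in>S. smul (c x) (B x))" by (rule exI[of _ "\<lambda>x. c x + d x"])
qed

lemma spanr_smul: "spanr S B a \<Longrightarrow> spanr S B (smul r a)"
  unfolding spanr_def
proof (elim exE)
  fix c assume "a = (\<Sum>x\<in>S. smul (c x) (B x))"
  then have "smul r a = (\<Sum>x\<in>S. smul (r * c x) (B x))"
    by (simp add: smul_sum smul_smul)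
  thus "\<exists>c. smul r a = (\<Sum>x\<in>S. smul (c x) (B x))" by (rule exI[of _ "\<lambda>x. r * c x"])
qed

lemma spanr_zero: "spanr S B 0"
  unfolding spanr_def by (rule exI[of _ "\<lambda>_. 0"]) simp

lemma spanr_basis: "finite S \<Longrightarrow> y \<in> S \<Longrightarrow> spanr S B (B y)"
  unfolding spanr_def
  by (rule exI[of _ "\<lambda>x. if x = y then 1 else 0"]) (simp add: if_distrib[of "\<lambda>c. smul c _"] sum.delta' cong: if_cong)

lemma Qr_add: "Qr n S B a \<Longrightarrow> Qr n S B b \<Longrightarrow> Qr n S B (a + b)"
  unfolding Qr_def by (elim exE conjE) (rule exI, rule conjI, erule (1) spanr_add, erule (1) eq_add)
lemma Qr_smul: "Qr n S B a \<Longrightarrow> Qr n S B (smul r a)"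
  unfolding Qr_def by (elim exE conjE) (rule exI, rule conjI, erule spanr_smul, erule eq_smul)
lemma Qr_zero: "Qr n S B 0"
  unfolding Qr_def by (rule exI, rule conjI, rule spanr_zero, rule eq_refl)
lemma Qr_neg: "Qr n S B a \<Longrightarrow> Qr n S B (- a)"
  using Qr_smul[of n S B a "-1"] by (simp add: smul_neg1)
lemma Qr_cong: "acaa_eq n a b \<Longrightarrow> Qr n S B b \<Longrightarrow> Qr n S B a"
  unfolding Qr_def by (elim exE conjE) (rule exI, rule conjI, assumption, erule (1) eq_trans)
lemma Qr_basis: "finite S \<Longrightarrow> y \<in> S \<Longrightarrow> Qr n S B (B y)"
  unfolding Qr_def by (rule exI, rule conjI, erule (1) spanr_basis, rule eq_refl)
lemma Qr_keys: "(\<And>t. t \<in> Poly_Mapping.keys p \<Longrightarrow> Qr n S B (mon t)) \<Longrightarrow> Qr n S B p"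
  by (rule keys_induct) (auto intro: Qr_add Qr_smul Qr_zero)

lemma deg_pos: "deg t \<ge> 1"
  by (induction t) auto
lemma deg_node: "deg t \<ge> 2 \<Longrightarrow> \<exists>a b. t = Node a b"
  by (cases t) auto
lemma deg_one: "\<exists>i. t = Leaf i" if "deg t = 1"
proof (cases t)
  case (Node s u) then show ?thesis using deg_pos[of s] deg_pos[of u] that by auto
qed auto




lemma deg4_mon:
  assumes L: "leaves t \<subseteq> {1..n}" and dg: "deg t \<ge> 4"
  shows "acaa_eq n (mon t) (0::'k::field_char_0 nalg)"
proof (cases t)
  case (Leaf i) then show ?thesis using dg by simp
next
  case (Node s u)
  have Ls: "leaves s \<subseteq> {1..n}" and Lu: "leaves u \<subseteq> {1..n}" using L Node by auto
  have ds: "deg s + deg u \<ge> 4" using dg Node by simp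
  consider (a) "deg s \<ge> 2" "deg u \<ge> 2" | (b) "deg s < 2" | (c) "deg u < 2" by linarith
  then show ?thesis
  proof cases
    case a
    obtain a b where s: "s = Node a b" using deg_node a(1) by blast
    obtain c d where u: "u = Node c d" using deg_node a(2) by blast
    have "acaa_eq n (mul (mul (mon a) (mon b)) (mul (mon c) (mon d))) (0::'k nalg)"
      using Ls Lu s u by (intro z2 FA_mon) auto
    thus ?thesis using Node s u by simp
  next
    case b
    have "deg s = 1" using b deg_pos[of s] by simp
    hence "deg u \<ge> 3" using ds by simp
    hence "deg u \<ge> 2" by simp
    then obtain a b where u: "u = Node a b" using deg_node by blast
    have "deg a + deg b \<ge> 3" using u \<open>deg u \<ge> 3\<close> by simp
    then consider "deg a \<ge> 2" | "deg b \<ge> 2" using deg_pos[of a] by linarith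
    then show ?thesis
    proof cases
      case 1
      obtain c d where a: "a = Node c d" using deg_node 1 by blast
      have "acaa_eq n (mul (mon s) (mul (mul (mon c) (mon d)) (mon b))) (0::'k nalg)"
        using Ls Lu a u by (intro z3 FA_mon) auto
      thus ?thesis using Node a u by simp
    next
      case 2
      obtain c d where b: "b = Node c d" using deg_node 2 by blast
      have "acaa_eq n (mul (mon s) (mul (mon a) (mul (mon c) (mon d)))) (0::'k nalg)"
        using Ls Lu b u by (intro f_zero FA_mon) auto
      thus ?thesis using Node b u by simp
    qed
  next
    case c
    have "deg u = 1" using c deg_pos[of u] by simp
    hence "deg s \<ge> 3" using ds by simp
    hence "deg s \<ge> 2" by simp
    then obtain a b where s: "s = Node a b" using deg_node by blast
    have "deg a + deg b \<ge> 3" using s \<open>deg s \<ge> 3\<close> by simp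
    then consider "deg a \<ge> 2" | "deg b \<ge> 2" using deg_pos[of a] by linarith
    then show ?thesis
    proof cases
      case 1
      obtain c d where a: "a = Node c d" using deg_node 1 by blast
      have "acaa_eq n (mul (mul (mul (mon c) (mon d)) (mon b)) (mon u)) (0::'k nalg)"
        using Ls Lu a s by (intro z5 FA_mon) auto
      thus ?thesis using Node a s by simp
    next
      case 2
      obtain c d where b: "b = Node c d" using deg_node 2 by blast
      have "acaa_eq n (mul (mul (mon a) (mul (mon c) (mon d))) (mon u)) (0::'k nalg)"
        using Ls Lu b s by (intro z4 FA_mon) auto
      thus ?thesis using Node b s by simp
    qed
  qed
qed

lemma part4:
  assumes "k \<ge> 4" "p \<in> (FAdeg n k :: 'k::field_char_0 nalg set)"
  shows "acaa_eq n p 0"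
proof (rule keys_induct[of "\<lambda>q. acaa_eq n q 0"])
  show "acaa_eq n 0 0" by (rule eq_refl)
  show "acaa_eq n (a + b) 0" if "acaa_eq n a 0" "acaa_eq n b 0" for a b :: "'k nalg"
    using eq_add[OF that] by simp
  show "acaa_eq n (smul c a) 0" if "acaa_eq n a 0" for a :: "'k nalg" and c
    using eq_smul[OF that, of c] by simp
  show "acaa_eq n (mon t :: 'k nalg) 0" if "t \<in> Poly_Mapping.keys p" for t
  proof (rule deg4_mon)
    show "leaves t \<subseteq> {1..n}" using assms that by (auto simp: FAdeg_def FA_def)
    show "deg t \<ge> 4" using assms that by (auto simp: FAdeg_def FA_def)
  qed
qed

lemma part1:
  assumes "p \<in> (FAdeg n 1 :: 'k::field nalg set)"
  shows "Qr n {1..n} gen p"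
proof (rule Qr_keys)
  fix t assume t: "t \<in> Poly_Mapping.keys p"
  then have "deg t = 1" "leaves t \<subseteq> {1..n}" using assms by (auto simp: FAdeg_def FA_def)
  moreover obtain i where "t = Leaf i" using deg_one[OF \<open>deg t = 1\<close>] by blast
  ultimately have "t = Leaf i" "i \<in> {1..n}" by auto
  then show "Qr n {1..n} gen (mon t)" by (simp add: Qr_basis)
qed

lemma Qr_exists: "Qr n S B p \<Longrightarrow> \<exists>c. acaa_eq n p (\<Sum>x\<in>S. smul (c x) (B x))"
  unfolding Qr_def spanr_def by (elim exE conjE) (rule exI, simp)




definition S2 :: "nat \<Rightarrow> (nat \<times> nat) set" where
  "S2 n = {(i,j). 1 \<le> i \<and> i < j \<and> j \<le> n}"
definition B2 :: "nat \<times> nat \<Rightarrow> 'k::field nalg" where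
  "B2 = (\<lambda>(i,j). mul (gen i) (gen j))"

lemma finite_S2: "finite (S2 n)"
  by (rule finite_subset[of _ "{1..n} \<times> {1..n}"]) (auto simp: S2_def)

lemma Q2gen:
  assumes "i \<in> {1..n}" "j \<in> {1..n}"
  shows "Qr n (S2 n) B2 (mul (gen i) (gen j) :: 'k::field_char_0 nalg)"
proof -
  have gi: "gen i \<in> FA n" and gj: "gen j \<in> FA n" using assms by auto
  consider "i < j" | "i = j" | "j < i" by linarith
  then show ?thesis
  proof cases
    case 1
    have "(i,j) \<in> S2 n" using assms 1 by (auto simp: S2_def)
    from Qr_basis[OF finite_S2 this, of n B2] show ?thesis by (simp add: B2_def)
  next
    case 2
    have "acaa_eq n (mul (gen i) (gen j)) (0 :: 'k nalg)"
      using 2 eq_self_neg[OF anti[OF gi gi]] by simp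
    then show ?thesis by (rule Qr_cong) (rule Qr_zero)
  next
    case 3
    have "(j,i) \<in> S2 n" using assms 3 by (auto simp: S2_def)
    from Qr_basis[OF finite_S2 this, of n B2] have "Qr n (S2 n) B2 (mul (gen j) (gen i) :: 'k nalg)"
      by (simp add: B2_def)
    from Qr_neg[OF this] show ?thesis by (rule Qr_cong[OF anti[OF gi gj]])
  qed
qed

lemma part2:
  assumes "p \<in> (FAdeg n 2 :: 'k::field_char_0 nalg set)"
  shows "Qr n (S2 n) B2 p"
proof (rule Qr_keys)
  fix t assume t: "t \<in> Poly_Mapping.keys p"
  then have d: "deg t = 2" and L: "leaves t \<subseteq> {1..n}" using assms by (auto simp: FAdeg_def FA_def)
  then obtain a b where ab: "t = Node a b" using deg_node[of t] by auto
  have "deg a = 1" "deg b = 1" using d ab deg_pos[of a] deg_pos[of b] by auto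
  then obtain i j where "a = Leaf i" "b = Leaf j" using deg_one by blast
  moreover have "i \<in> {1..n}" "j \<in> {1..n}" using L ab calculation by auto
  ultimately show "Qr n (S2 n) B2 (mon t :: 'k nalg)" using ab Q2gen by simp
qed

definition S3 :: "nat \<Rightarrow> (nat \<times> nat \<times> nat) set" where
  "S3 n = {(i,j,k). 1 \<le> i \<and> i < j \<and> j < k \<and> k \<le> n}"
definition B3 :: "nat \<times> nat \<times> nat \<Rightarrow> 'k::field nalg" where
  "B3 = (\<lambda>(i,j,k). mul (gen i) (mul (gen j) (gen k)))"

lemma finite_S3: "finite (S3 n)"
  by (rule finite_subset[of _ "{1..n} \<times> {1..n} \<times> {1..n}"]) (auto simp: S3_def)

lemma bas3: "a < b \<Longrightarrow> b < c \<Longrightarrow> a \<in> {1..n} \<Longrightarrow> c \<in> {1..n} \<Longrightarrow>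
   Qr n (S3 n) B3 (mul (gen a) (mul (gen b) (gen c)) :: 'k::field nalg)"
  using Qr_basis[OF finite_S3, of "(a,b,c)" n n B3] by (simp add: S3_def B3_def)

lemma Q3gen:
  assumes "i \<in> {1..n}" "j \<in> {1..n}" "k \<in> {1..n}"
  shows "Qr n (S3 n) B3 (mul (gen i) (mul (gen j) (gen k)) :: 'k::field_char_0 nalg)"
proof -
  have g: "gen i \<in> FA n" "gen j \<in> FA n" "gen k \<in> FA n" using assms by auto
  let ?G = "\<lambda>a b c. mul (gen a) (mul (gen b) (gen c)) :: 'k nalg"
  consider "i = j" | "j = k" | "i = k" | "i < j" "j < k" | "i < k" "k < j" | "j < i" "i < k"
    | "j < k" "k < i" | "k < i" "i < j" | "k < j" "j < i" by linarith
  then show ?thesis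
  proof cases
    case 1
    have "acaa_eq n (?G i j k) 0" using 1 eq_self_neg[OF sw12[OF g(1) g(1) g(3)]] by simp
    then show ?thesis by (rule Qr_cong) (rule Qr_zero)
  next
    case 2
    have "acaa_eq n (?G i j k) 0" using 2 eq_self_neg[OF sw23[OF g(1) g(2) g(2)]] by simp
    then show ?thesis by (rule Qr_cong) (rule Qr_zero)
  next
    case 3
    have "acaa_eq n (?G i j k) (?G j k i)" by (rule cyc[OF g])
    also have "acaa_eq n (?G j k i) 0" using 3 eq_self_neg[OF sw23[OF g(2) g(1) g(1)]] by simp
    finally show ?thesis by (rule Qr_cong) (rule Qr_zero)
  next
    case 4 then show ?thesis using assms by (intro bas3) auto
  next
    case 5
    have "Qr n (S3 n) B3 (- ?G i k j)" using 5 assms by (intro Qr_neg bas3) auto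
    then show ?thesis by (rule Qr_cong[OF sw23[OF g]])
  next
    case 6
    have "Qr n (S3 n) B3 (- ?G j i k)" using 6 assms by (intro Qr_neg bas3) auto
    then show ?thesis by (rule Qr_cong[OF sw12[OF g]])
  next
    case 7
    have "Qr n (S3 n) B3 (?G j k i)" using 7 assms by (intro bas3) auto
    then show ?thesis by (rule Qr_cong[OF cyc[OF g]])
  next
    case 8
    have "acaa_eq n (?G i j k) (?G j k i)" by (rule cyc[OF g])
    also have "acaa_eq n (?G j k i) (?G k i j)" by (rule cyc[OF g(2) g(3) g(1)])
    finally have e: "acaa_eq n (?G i j k) (?G k i j)" .
    have "Qr n (S3 n) B3 (?G k i j)" using 8 assms by (intro bas3) auto
    then show ?thesis by (rule Qr_cong[OF e])
  next
    case 9
    have "acaa_eq n (?G i j k) (- ?G i k j)" by (rule sw23[OF g])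
    also have "acaa_eq n (- ?G i k j) (- ?G k j i)" by (rule eq_neg[OF cyc[OF g(1) g(3) g(2)]])
    finally have e: "acaa_eq n (?G i j k) (- ?G k j i)" .
    have "Qr n (S3 n) B3 (- ?G k j i)" using 9 assms by (intro Qr_neg bas3) auto
    then show ?thesis by (rule Qr_cong[OF e])
  qed
qed

lemma part3:
  assumes "p \<in> (FAdeg n 3 :: 'k::field_char_0 nalg set)"
  shows "Qr n (S3 n) B3 p"
proof (rule Qr_keys)
  fix t assume t: "t \<in> Poly_Mapping.keys p"
  then have d: "deg t = 3" and L: "leaves t \<subseteq> {1..n}" using assms by (auto simp: FAdeg_def FA_def)
  then obtain a b where ab: "t = Node a b" using deg_node[of t] by auto
  have "deg a + deg b = 3" using d ab by simp
  then consider "deg a = 1" "deg b = 2" | "deg a = 2" "deg b = 1" using deg_pos[of a] deg_pos[of b] by linarith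
  then show "Qr n (S3 n) B3 (mon t :: 'k nalg)"
  proof cases
    case 1
    obtain i where i: "a = Leaf i" using deg_one[OF 1(1)] by blast
    obtain c d where cd: "b = Node c d" using deg_node 1(2) by force
    have "deg c = 1" "deg d = 1" using 1 cd deg_pos[of c] deg_pos[of d] by auto
    then obtain j k where "c = Leaf j" "d = Leaf k" using deg_one by blast
    moreover have "i \<in> {1..n}" "j \<in> {1..n}" "k \<in> {1..n}" using L ab i cd calculation by auto
    ultimately show ?thesis using ab i cd Q3gen by simp
  next
    case 2
    obtain k where k: "b = Leaf k" using deg_one[OF 2(2)] by blast
    obtain c d where cd: "a = Node c d" using deg_node 2(1) by force
    have "deg c = 1" "deg d = 1" using 2 cd deg_pos[of c] deg_pos[of d] by auto
    then obtain i j where "c = Leaf i" "d = Leaf j" using deg_one by blast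
    moreover have "i \<in> {1..n}" "j \<in> {1..n}" "k \<in> {1..n}" using L ab k cd calculation by auto
    ultimately have ij: "c = Leaf i" "d = Leaf j" "i \<in> {1..n}" "j \<in> {1..n}" "k \<in> {1..n}" by auto
    have gg: "gen i \<in> FA n" "gen j \<in> FA n" "gen k \<in> FA n" using ij by auto
    have "Qr n (S3 n) B3 (- mul (gen k) (mul (gen i) (gen j)) :: 'k nalg)"
      using ij by (intro Qr_neg Q3gen) auto
    then have "Qr n (S3 n) B3 (mul (mul (gen i) (gen j)) (gen k) :: 'k nalg)"
      by (rule Qr_cong[OF anti[OF FA_mul[OF gg(1) gg(2)] gg(3)]])
    then show ?thesis using ab k cd ij by simp
  qed
qed




theorem mainTheorem6:
  fixes n :: nat
  assumes "n \<ge> 1"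
  shows "(\<forall>p \<in> (FAdeg n 1 :: 'k::field_char_0 nalg set).
            \<exists>c. acaa_eq n p (\<Sum>i\<in>{1..n}. smul (c i) (gen i)))
       \<and> (\<forall>p \<in> (FAdeg n 2 :: 'k nalg set).
            \<exists>c. acaa_eq n p (\<Sum>(i,j)\<in>{(i,j). 1 \<le> i \<and> i < j \<and> j \<le> n}.
                   smul (c i j) (mul (gen i) (gen j))))
       \<and> (\<forall>p \<in> (FAdeg n 3 :: 'k nalg set).
            \<exists>c. acaa_eq n p (\<Sum>(i,j,k)\<in>{(i,j,k). 1 \<le> i \<and> i < j \<and> j < k \<and> k \<le> n}.
                   smul (c i j k) (mul (gen i) (mul (gen j) (gen k)))))
       \<and> (\<forall>k \<ge> 4. \<forall>p \<in> (FAdeg n k :: 'k nalg set). acaa_eq n p 0)"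
proof (intro conjI ballI allI impI)
  fix p :: "'k nalg" assume "p \<in> FAdeg n 1"
  from Qr_exists[OF part1[OF this]]
  show "\<exists>c. acaa_eq n p (\<Sum>i\<in>{1..n}. smul (c i) (gen i))" .
next
  fix p :: "'k nalg" assume "p \<in> FAdeg n 2"
  from Qr_exists[OF part2[OF this]] obtain c where
    c: "acaa_eq n p (\<Sum>x\<in>S2 n. smul (c x) (B2 x))" by blast
  have "(\<Sum>x\<in>S2 n. smul (c x) (B2 x)) = (\<Sum>(i,j)\<in>{(i,j). 1 \<le> i \<and> i < j \<and> j \<le> n}.
                   smul ((\<lambda>i j. c (i,j)) i j) (mul (gen i) (gen j)))"
    unfolding S2_def B2_def by (rule sum.cong) auto
  with c show "\<exists>c. acaa_eq n p (\<Sum>(i,j)\<in>{(i,j). 1 \<le> i \<and> i < j \<and> j \<le> n}.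
                   smul (c i j) (mul (gen i) (gen j)))" by (intro exI[of _ "\<lambda>i j. c (i,j)"]) simp
next
  fix p :: "'k nalg" assume "p \<in> FAdeg n 3"
  from Qr_exists[OF part3[OF this]] obtain c where
    c: "acaa_eq n p (\<Sum>x\<in>S3 n. smul (c x) (B3 x))" by blast
  have "(\<Sum>x\<in>S3 n. smul (c x) (B3 x)) = (\<Sum>(i,j,k)\<in>{(i,j,k). 1 \<le> i \<and> i < j \<and> j < k \<and> k \<le> n}.
                   smul ((\<lambda>i j k. c (i,j,k)) i j k) (mul (gen i) (mul (gen j) (gen k))))"
    unfolding S3_def B3_def by (rule sum.cong) auto
  with c show "\<exists>c. acaa_eq n p (\<Sum>(i,j,k)\<in>{(i,j,k). 1 \<le> i \<and> i < j \<and> j < k \<and> k \<le> n}.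
                   smul (c i j k) (mul (gen i) (mul (gen j) (gen k))))" by (intro exI[of _ "\<lambda>i j k. c (i,j,k)"]) simp
next
  fix k and p :: "'k nalg" assume "4 \<le> k" "p \<in> FAdeg n k"
  then show "acaa_eq n p 0" by (rule part4)
qed


end
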